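(* Define: (a) $a_n$ ($n\ge0$) as the number of letters of $P_1^n(\mathtt L)$, where $P_1$ is the letterwise substitution $\mathtt R\mapsto\mathtt{Rr}$, $\mathtt r\mapsto\mathtt S$, $\mathtt L\mapsto\mathtt S$, $\mathtt l\mapsto\mathtt{Ll}$, $\mathtt S\mapsto\mathtt{Rl}$, $\mathtt s\mapsto\mathtt{Lr}$; (b) $b_n$ ($n\ge1$) by $\frac{x(1+x^2)}{1-x-2x^3}=\sum_{n\ge1}b_nx^n$; (c) $c_n=|S_n|$ for $n\ge1$, where $S_n$ is the set of binary sequences of length $n$ with no maximal run of zeros of length $\equiv1\pmod 3$, and $c_0:=1$; (d) $d_n=|A_n|$ for $n\ge1$, where $A_n$ is the set of $n\times2$ arrays over $\{0,1,2\}$ in which every $1$ has a $0$ immediately to its left or above it, no $0$ has a $0$ immediately to its left or above it, and every $2$ has in its column a $1$ immediately above it and a $0$ immediately above that. Then for all $n\ge0$, $$a_n=b_{n+1}=c_n=d_{n+1}.$$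
   Context: $a_n$ is the length of the right side boundary of the polyomino $\mathcal S_n$ containing the $n$-th Harter–Heighway dragon curve. The sequences begin $1,1,2,4,6,10,\dots$ (for $a_0,a_1,\ldots$). *)

theory Defs
  imports Complex_Main "HOL-Computational_Algebra.Formal_Power_Series"
begin

datatype dletter = DR | Dr | DL | Dl | DS | Ds

fun P1 :: "dletter \<Rightarrow> dletter list" where
  "P1 DR = [DR, Dr]"
| "P1 Dr = [DS]"
| "P1 DL = [DS]"
| "P1 Dl = [DL, Dl]"
| "P1 DS = [DR, Dl]"
| "P1 Ds = [DL, Dr]"

definition P1_word :: "dletter list \<Rightarrow> dletter list" where
  "P1_word w = concat (map P1 w)"

definition seq_a :: "nat \<Rightarrow> nat" where
  "seq_a n = length ((P1_word ^^ n) [DL])"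

definition gf_b :: "rat fps" where
  "gf_b = fps_X * (1 + fps_X ^ 2) / (1 - fps_X - 2 * fps_X ^ 3)"

definition seq_b :: "nat \<Rightarrow> rat" where
  "seq_b n = fps_nth gf_b n"

definition max_zero_run :: "nat list \<Rightarrow> nat \<Rightarrow> nat \<Rightarrow> bool" where
  "max_zero_run w i k \<longleftrightarrow> 1 \<le> k \<and> i + k \<le> length w
     \<and> (\<forall>j. i \<le> j \<and> j < i + k \<longrightarrow> w ! j = 0)
     \<and> (i = 0 \<or> w ! (i - 1) \<noteq> 0)
     \<and> (i + k = length w \<or> w ! (i + k) \<noteq> 0)"

definition set_S :: "nat \<Rightarrow> nat list set" where
  "set_S n = {w. length w = n \<and> set w \<subseteq> {0, 1}
                 \<and> \<not> (\<exists>i k. max_zero_run w i k \<and> k mod 3 = 1)}"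

definition seq_c :: "nat \<Rightarrow> nat" where
  "seq_c n = (if n = 0 then 1 else card (set_S n))"

text \<open>An array is a list of n rows, each a list of 2 entries; entry \<open>A ! i ! j\<close>
  is in row i (rows numbered top to bottom) and column j (left to right).
  "Left of (i,j)" is (i,j-1), "above (i,j)" is (i-1,j).\<close>
definition array_ok :: "nat list list \<Rightarrow> bool" where
  "array_ok A \<longleftrightarrow>
     (\<forall>i < length A. \<forall>j < 2.
        (A ! i ! j = 1 \<longrightarrow> (0 < j \<and> A ! i ! (j - 1) = 0) \<or> (0 < i \<and> A ! (i - 1) ! j = 0))
      \<and> (A ! i ! j = 0 \<longrightarrow> \<not> (0 < j \<and> A ! i ! (j - 1) = 0) \<and> \<not> (0 < i \<and> A ! (i - 1) ! j = 0))
      \<and> (A ! i ! j = 2 \<longrightarrow> 2 \<le> i \<and> A ! (i - 1) ! j = 1 \<and> A ! (i - 2) ! j = 0))"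

definition set_A :: "nat \<Rightarrow> nat list list set" where
  "set_A n = {A. length A = n \<and> (\<forall>row \<in> set A. length row = 2 \<and> set row \<subseteq> {0, 1, 2})
                 \<and> array_ok A}"

definition seq_d :: "nat \<Rightarrow> nat" where
  "seq_d n = card (set_A n)"

end

theory Submission
  imports Defs
begin


fun rr :: "nat \<Rightarrow> nat" where
  "rr 0 = 1" | "rr (Suc 0) = 1" | "rr (Suc (Suc 0)) = 2"
| "rr (Suc (Suc (Suc n))) = rr (Suc (Suc n)) + 2 * rr n"

lemma P1_word_append: "P1_word (xs @ ys) = P1_word xs @ P1_word ys"
  by (simp add: P1_word_def)

lemma P1_pow_append: "(P1_word ^^ n) (xs @ ys) = (P1_word ^^ n) xs @ (P1_word ^^ n) ys"
  by (induction n) (simp_all add: P1_word_append)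

definition fl :: "dletter \<Rightarrow> nat \<Rightarrow> nat" where
  "fl x n = length ((P1_word ^^ n) [x])"

lemma fl_Suc: "fl x (Suc n) = length ((P1_word ^^ n) (P1 x))"
  unfolding fl_def funpow_Suc_right by (simp add: P1_word_def)

lemma fl_0: "fl x 0 = 1" by (simp add: fl_def)

lemma fl_rec:
  "fl DR (Suc n) = fl DR n + fl Dr n"
  "fl Dr (Suc n) = fl DS n"
  "fl DL (Suc n) = fl DS n"
  "fl Dl (Suc n) = fl DL n + fl Dl n"
  "fl DS (Suc n) = fl DR n + fl Dl n"
  using P1_pow_append[of n "[DR]" "[Dr]"] P1_pow_append[of n "[DL]" "[Dl]"]
    P1_pow_append[of n "[DR]" "[Dl]"]
  by (simp only: fl_Suc P1.simps; simp add: fl_def)+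

lemma fl_rL: "fl Dr n = fl DL n"
  by (cases n) (simp_all add: fl_0 fl_rec)

lemma fl_L3: "fl DL (Suc (Suc (Suc n))) = fl DL (Suc (Suc n)) + 2 * fl DL n"
  by (simp add: fl_rec fl_rL)

lemma seq_a_rr: "seq_a n = rr n"
proof (induction n rule: rr.induct)
  case 1 then show ?case by (simp add: seq_a_def P1_word_def)
next
  case 2 then show ?case by (simp add: seq_a_def P1_word_def)
next
  case 3 then show ?case by (simp add: seq_a_def P1_word_def numeral_2_eq_2)
next
  case (4 n)
  have e: "seq_a m = fl DL m" for m by (simp add: seq_a_def fl_def)
  show ?case using 4 fl_L3[of n] unfolding e by simp
qed

lemma gf_b_eq: "gf_b * (1 - fps_X - 2 * fps_X ^ 3) = fps_X * (1 + fps_X ^ 2)"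
proof -
  have h: "fps_nth (1 - fps_X - 2 * fps_X ^ 3 :: rat fps) 0 \<noteq> 0" by simp
  show ?thesis unfolding gf_b_def
    using h by (simp add: fps_divide_unit mult.assoc inverse_mult_eq_1)
qed

lemma gf_b_coeff: "fps_nth gf_b k = (if k = 1 then 1 else 0) + (if k = 3 then 1 else 0)
   + (if k = 0 then 0 else fps_nth gf_b (k - 1)) + 2 * (if k < 3 then 0 else fps_nth gf_b (k - 3))"
proof -
  have e: "gf_b = fps_X + fps_X ^ 3 + fps_X * gf_b + fps_X ^ 3 * gf_b + fps_X ^ 3 * gf_b"
    using gf_b_eq by (simp add: algebra_simps power3_eq_cube power2_eq_square)
  have "fps_nth gf_b k = fps_nth (fps_X + fps_X ^ 3 + fps_X * gf_b + fps_X ^ 3 * gf_b + fps_X ^ 3 * gf_b) k"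
    using e by simp
  also have "\<dots> = (if k = 1 then 1 else 0) + (if k = 3 then 1 else 0)
   + (if k = 0 then 0 else fps_nth gf_b (k - 1)) + 2 * (if k < 3 then 0 else fps_nth gf_b (k - 3))"
    by (simp only: fps_add_nth fps_X_mult_nth fps_X_power_mult_nth fps_X_power_nth fps_X_nth)
  finally show ?thesis .
qed

lemma seq_b_rr: "seq_b (Suc n) = of_nat (rr n)"
proof -
  have b0: "fps_nth gf_b 0 = 0" using gf_b_coeff[of 0] by simp
  have b1: "fps_nth gf_b 1 = 1" using gf_b_coeff[of 1] b0 by simp
  have b2: "fps_nth gf_b 2 = 1" using gf_b_coeff[of 2] b1 by simp
  have b3: "fps_nth gf_b 3 = 2" using gf_b_coeff[of 3] b2 b0 by simp
  have bs: "fps_nth gf_b (Suc (Suc (Suc (Suc k)))) = fps_nth gf_b (Suc (Suc (Suc k))) + 2 * fps_nth gf_b (Suc k)" for k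
    using gf_b_coeff[of "Suc (Suc (Suc (Suc k)))"] by simp
  show ?thesis unfolding seq_b_def
  proof (induction n rule: rr.induct)
    case 1 then show ?case using b1 by simp
  next
    case 2 then show ?case using b2 by (simp add: numeral_2_eq_2)
  next
    case 3 then show ?case using b3 by (simp add: numeral_3_eq_3)
  next
    case (4 n) then show ?case using bs[of n] by simp
  qed
qed



definition bad :: "nat list \<Rightarrow> bool" where
  "bad w \<longleftrightarrow> (\<exists>i k. max_zero_run w i k \<and> k mod 3 = 1)"

lemma nth_split: "(v @ 1 # y) ! j = (if j < length v then v ! j else if j = length v then 1 else y ! (j - Suc (length v)))"
  by (simp add: nth_append nth_Cons')

lemma mzr_split:
  "max_zero_run (v @ 1 # y) i k \<longleftrightarrow>
     max_zero_run v i k \<or> (length v < i \<and> max_zero_run y (i - Suc (length v)) k)"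
  (is "?L \<longleftrightarrow> ?R")
proof
  let ?w = "v @ 1 # y" and ?m = "length v"
  assume L: ?L
  then have k1: "1 \<le> k" and ik: "i + k \<le> length ?w" and z: "\<And>j. i \<le> j \<Longrightarrow> j < i + k \<Longrightarrow> ?w ! j = 0"
    and lft: "i = 0 \<or> ?w ! (i - 1) \<noteq> 0" and rgt: "i + k = length ?w \<or> ?w ! (i + k) \<noteq> 0"
    unfolding max_zero_run_def by blast+
  have notin: "\<not> (i \<le> ?m \<and> ?m < i + k)"
    using z[of ?m] by (auto simp: nth_append nth_Cons')
  show ?R
  proof (cases "i + k \<le> ?m")
    case True
    have "max_zero_run v i k"
      unfolding max_zero_run_def
    proof (intro conjI allI impI)
      show "1 \<le> k" by fact
      show "i + k \<le> length v" by fact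
      fix j assume "i \<le> j \<and> j < i + k"
      then show "v ! j = 0" using z[of j] True by (auto simp: nth_append nth_Cons')
    next
      show "i = 0 \<or> v ! (i - 1) \<noteq> 0" using lft True k1 by (auto simp: nth_append nth_Cons' split: if_splits)
    next
      show "i + k = length v \<or> v ! (i + k) \<noteq> 0" using rgt True by (auto simp: nth_append nth_Cons' split: if_splits)
    qed
    then show ?thesis by blast
  next
    case False
    then have im: "?m < i" using notin by auto
    have "max_zero_run y (i - Suc ?m) k"
      unfolding max_zero_run_def
    proof (intro conjI allI impI)
      show "1 \<le> k" by fact
      show "i - Suc ?m + k \<le> length y" using ik im by simp
      fix j assume "i - Suc ?m \<le> j \<and> j < i - Suc ?m + k"
      then show "y ! j = 0" using z[of "j + Suc ?m"] im by (auto simp: nth_append nth_Cons')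
    next
      show "i - Suc ?m = 0 \<or> y ! (i - Suc ?m - 1) \<noteq> 0" using lft im
        by (auto simp: nth_append nth_Cons' split: if_splits)
    next
      show "i - Suc ?m + k = length y \<or> y ! (i - Suc ?m + k) \<noteq> 0" using rgt im
        by (auto simp: nth_append nth_Cons' split: if_splits)
    qed
    then show ?thesis using im by blast
  qed
next
  let ?w = "v @ 1 # y" and ?m = "length v"
  assume ?R
  then show ?L
  proof
    assume "max_zero_run v i k"
    then have k1: "1 \<le> k" and ik: "i + k \<le> ?m" and z: "\<And>j. i \<le> j \<Longrightarrow> j < i + k \<Longrightarrow> v ! j = 0"
      and lft: "i = 0 \<or> v ! (i - 1) \<noteq> 0" and rgt: "i + k = ?m \<or> v ! (i + k) \<noteq> 0"
      unfolding max_zero_run_def by blast+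
    show ?L unfolding max_zero_run_def
    proof (intro conjI allI impI)
      show "1 \<le> k" by fact
      show "i + k \<le> length ?w" using ik by simp
      fix j assume "i \<le> j \<and> j < i + k"
      then show "?w ! j = 0" using z[of j] ik by (auto simp: nth_append nth_Cons')
    next
      show "i = 0 \<or> ?w ! (i - 1) \<noteq> 0" using lft ik k1 by (auto simp: nth_append nth_Cons')
    next
      show "i + k = length ?w \<or> ?w ! (i + k) \<noteq> 0" using rgt ik by (auto simp: nth_append nth_Cons')
    qed
  next
    assume a: "?m < i \<and> max_zero_run y (i - Suc ?m) k"
    then have im: "?m < i" by blast
    from a have k1: "1 \<le> k" and ik: "i - Suc ?m + k \<le> length y"
      and z: "\<And>j. i - Suc ?m \<le> j \<Longrightarrow> j < i - Suc ?m + k \<Longrightarrow> y ! j = 0"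
      and lft: "i - Suc ?m = 0 \<or> y ! (i - Suc ?m - 1) \<noteq> 0"
      and rgt: "i - Suc ?m + k = length y \<or> y ! (i - Suc ?m + k) \<noteq> 0"
      unfolding max_zero_run_def by blast+
    show ?L unfolding max_zero_run_def
    proof (intro conjI allI impI)
      show "1 \<le> k" by fact
      show "i + k \<le> length ?w" using ik im by simp
      fix j assume "i \<le> j \<and> j < i + k"
      then show "?w ! j = 0" using z[of "j - Suc ?m"] im by (auto simp: nth_append nth_Cons')
    next
      show "i = 0 \<or> ?w ! (i - 1) \<noteq> 0" using lft im
        by (cases "i = Suc ?m") (auto simp: nth_append nth_Cons')
    next
      show "i + k = length ?w \<or> ?w ! (i + k) \<noteq> 0" using rgt im
        by (auto simp: nth_append nth_Cons')
    qed
  qed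
qed

lemma bad_split: "bad (v @ 1 # y) \<longleftrightarrow> bad v \<or> bad y"
  unfolding bad_def mzr_split
  apply (rule iffI)
   apply blast
  apply (elim disjE exE conjE)
   apply blast
  subgoal for i k by (rule exI[of _ "i + Suc (length v)"], rule exI[of _ k]) simp
  done

lemma mzr_rep: "max_zero_run (replicate n 0) i k \<longleftrightarrow> i = 0 \<and> k = n \<and> 1 \<le> n"
proof
  assume a: "max_zero_run (replicate n 0) i k"
  then have "i = 0" unfolding max_zero_run_def by auto
  with a show "i = 0 \<and> k = n \<and> 1 \<le> n" unfolding max_zero_run_def
    by (cases "k < n") auto
qed (auto simp: max_zero_run_def)

lemma bad_rep: "bad (replicate n 0) \<longleftrightarrow> n mod 3 = 1"
  unfolding bad_def mzr_rep by auto

lemma bad_Nil: "\<not> bad []"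
  using bad_rep[of 0] by simp

lemma bad_app1: "bad (v @ [1]) \<longleftrightarrow> bad v"
  using bad_split[of v "[]"] bad_Nil by simp

lemma bad_app10: "bad (v @ [1, 0])"
  using bad_split[of v "[0]"] bad_rep[of 1] by simp

lemma bad_app100: "bad (v @ [1, 0, 0]) \<longleftrightarrow> bad v"
  using bad_split[of v "[0,0]"] bad_rep[of 2] by (simp add: numeral_2_eq_2)

lemma rep3: "replicate n x @ [x, x, x] = x # x # x # replicate n x"
  by (induct n) auto

lemma rep0: "set zs \<subseteq> {0::nat} \<Longrightarrow> zs = replicate (length zs) 0"
  by (intro replicate_eqI) auto

lemma bad_app000:
  assumes "set v \<subseteq> {0, 1}"
  shows "bad (v @ [0, 0, 0]) \<longleftrightarrow> bad v"
proof (cases "1 \<in> set v")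
  case True
  obtain v1 zs where v: "v = v1 @ 1 # zs" and nz: "1 \<notin> set zs"
    using split_list_last[OF True] by blast
  have "set zs \<subseteq> {0}" using assms nz v by auto
  then have zs: "zs = replicate (length zs) 0" by (rule rep0)
  have r: "replicate (length zs + 3) 0 = replicate (length zs) (0::nat) @ [0,0,0]"
    by (simp add: numeral_3_eq_3 rep3)
  have e: "v @ [0,0,0] = v1 @ 1 # replicate (length zs + 3) 0"
    unfolding r by (simp add: v rep3 flip: zs)
  have "bad (v @ [0,0,0]) \<longleftrightarrow> bad v1 \<or> (length zs + 3) mod 3 = 1"
    unfolding e bad_split bad_rep ..
  moreover have "bad v \<longleftrightarrow> bad v1 \<or> bad zs"
    using v bad_split by simp
  moreover have "bad zs \<longleftrightarrow> length zs mod 3 = 1"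
    using zs bad_rep by metis
  ultimately show ?thesis by simp
next
  case False
  have "set v \<subseteq> {0}" using assms False by auto
  then have v: "v = replicate (length v) 0" by (rule rep0)
  have r: "replicate (length v + 3) 0 = replicate (length v) (0::nat) @ [0,0,0]"
    by (simp add: numeral_3_eq_3 rep3)
  have e: "v @ [0,0,0] = replicate (length v + 3) 0"
    unfolding r by (simp add: rep3 flip: v)
  have "bad v \<longleftrightarrow> length v mod 3 = 1"
    using v bad_rep by metis
  then show ?thesis unfolding e bad_rep by simp
qed



lemma set_S_bad: "set_S n = {w. length w = n \<and> set w \<subseteq> {0, 1} \<and> \<not> bad w}"
  unfolding set_S_def bad_def by blast

lemma finite_S: "finite (set_S n)"
proof -
  have "set_S n \<subseteq> {xs. set xs \<subseteq> {0,1} \<and> length xs = n}" unfolding set_S_def by blast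
  moreover have "finite {xs. set xs \<subseteq> {0::nat,1} \<and> length xs = n}"
    by (rule finite_lists_length_eq) simp
  ultimately show ?thesis by (rule finite_subset)
qed

lemma len3: "length w = Suc (Suc (Suc n)) \<Longrightarrow> \<exists>v a b c. w = v @ [a, b, c] \<and> length v = n"
proof -
  assume "length w = Suc (Suc (Suc n))"
  then obtain w1 c where "w = w1 @ [c]" "length w1 = Suc (Suc n)" by (metis length_Suc_conv_rev)
  moreover from this(2) obtain w2 b where "w1 = w2 @ [b]" "length w2 = Suc n" by (metis length_Suc_conv_rev)
  moreover from this(2) obtain v a where "w2 = v @ [a]" "length v = n" by (metis length_Suc_conv_rev)
  ultimately show ?thesis by auto
qed

lemma S_decomp: "set_S (Suc (Suc (Suc n))) =
   (\<lambda>v. v @ [1]) ` set_S (Suc (Suc n)) \<union> (\<lambda>v. v @ [0,0,0]) ` set_S n \<union> (\<lambda>v. v @ [1,0,0]) ` set_S n"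
proof (intro equalityI subsetI)
  fix w assume w: "w \<in> set_S (Suc (Suc (Suc n)))"
  then obtain v a b c where e: "w = v @ [a, b, c]" and lv: "length v = n"
    using len3 unfolding set_S_bad by blast
  from w e have sv: "set v \<subseteq> {0,1}" and abc: "a \<in> {0,1}" "b \<in> {0,1}" "c \<in> {0,1}"
    and nb: "\<not> bad (v @ [a,b,c])" unfolding set_S_bad by auto
  show "w \<in> (\<lambda>v. v @ [1]) ` set_S (Suc (Suc n)) \<union> (\<lambda>v. v @ [0,0,0]) ` set_S n \<union> (\<lambda>v. v @ [1,0,0]) ` set_S n"
  proof (cases "c = 1")
    case True
    have "w = (v @ [a, b]) @ [1]" using e True by simp
    moreover have "v @ [a, b] \<in> set_S (Suc (Suc n))"
      using nb True lv sv abc bad_app1[of "v @ [a,b]"] unfolding set_S_bad by auto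
    ultimately show ?thesis by blast
  next
    case False
    then have c0: "c = 0" using abc by auto
    show ?thesis
    proof (cases "b = 1")
      case True
      then have "bad (v @ [a,b,c])" using c0 bad_app10[of "v @ [a]"] by simp
      then show ?thesis using nb by blast
    next
      case False
      then have b0: "b = 0" using abc by auto
      show ?thesis
      proof (cases "a = 1")
        case True
        then have "v \<in> set_S n" using nb b0 c0 bad_app100[of v] lv sv unfolding set_S_bad by auto
        then show ?thesis using e True b0 c0 by blast
      next
        case False
        then have a0: "a = 0" using abc by auto
        then have "v \<in> set_S n" using nb b0 c0 bad_app000[of v] lv sv unfolding set_S_bad by auto
        then show ?thesis using e a0 b0 c0 by blast
      qed
    qed
  qed
next
  fix w assume "w \<in> (\<lambda>v. v @ [1]) ` set_S (Suc (Suc n)) \<union> (\<lambda>v. v @ [0,0,0]) ` set_S n \<union> (\<lambda>v. v @ [1,0,0]) ` set_S n"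
  then show "w \<in> set_S (Suc (Suc (Suc n)))"
  proof (elim UnE imageE)
    fix v assume "v \<in> set_S (Suc (Suc n))" "w = v @ [1]"
    then show ?thesis using bad_app1[of v] unfolding set_S_bad by auto
  next
    fix v assume "v \<in> set_S n" "w = v @ [0,0,0]"
    then show ?thesis using bad_app000[of v] unfolding set_S_bad by auto
  next
    fix v assume "v \<in> set_S n" "w = v @ [1,0,0]"
    then show ?thesis using bad_app100[of v] unfolding set_S_bad by auto
  qed
qed

lemma card_S_rec: "card (set_S (Suc (Suc (Suc n)))) = card (set_S (Suc (Suc n))) + 2 * card (set_S n)"
proof -
  have i1: "inj_on (\<lambda>v. v @ [1::nat]) X" for X by (simp add: inj_on_def)
  have i2: "inj_on (\<lambda>v. v @ [0::nat,0,0]) X" for X by (simp add: inj_on_def)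
  have i3: "inj_on (\<lambda>v. v @ [1::nat,0,0]) X" for X by (simp add: inj_on_def)
  have d1: "(\<lambda>v. v @ [1::nat]) ` X \<inter> ((\<lambda>v. v @ [0,0,0]) ` Y \<union> (\<lambda>v. v @ [1,0,0]) ` Y) = {}" for X Y
    by (auto dest: arg_cong[where f = last])
  have d2: "(\<lambda>v. v @ [0::nat,0,0]) ` Y \<inter> (\<lambda>v. v @ [1,0,0]) ` Y = {}" for Y
  proof -
    have "v @ [0::nat,0,0] \<noteq> v' @ [1,0,0]" for v v'
    proof
      assume "v @ [0::nat,0,0] = v' @ [1,0,0]"
      then have "rev (v @ [0::nat,0,0]) = rev (v' @ [1,0,0])" by simp
      then show False by simp
    qed
    then show ?thesis by blast
  qed
  have f: "finite (set_S m)" for m by (rule finite_S)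
  let ?A = "(\<lambda>v. v @ [1::nat]) ` set_S (Suc (Suc n))"
  let ?B = "(\<lambda>v. v @ [0::nat,0,0]) ` set_S n"
  let ?C = "(\<lambda>v. v @ [1::nat,0,0]) ` set_S n"
  have cA: "card ?A = card (set_S (Suc (Suc n)))" by (rule card_image[OF i1])
  have cB: "card ?B = card (set_S n)" by (rule card_image[OF i2])
  have cC: "card ?C = card (set_S n)" by (rule card_image[OF i3])
  have "card (?A \<union> ?B \<union> ?C) = card (?A \<union> (?B \<union> ?C))" by (simp only: Un_assoc)
  also have "\<dots> = card ?A + card (?B \<union> ?C)"
    by (rule card_Un_disjoint) (use f d1 in auto)
  also have "card (?B \<union> ?C) = card ?B + card ?C"
    by (rule card_Un_disjoint) (use f d2 in auto)
  finally show ?thesis unfolding S_decomp using cA cB cC by simp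
qed

lemma S0: "set_S 0 = {[]}"
  unfolding set_S_bad using bad_Nil by auto

lemma S1: "set_S (Suc 0) = {[1]}"
proof -
  have b0: "bad [0]" using bad_rep[of 1] by simp
  have b1: "\<not> bad [1]" using bad_app1[of "[]"] bad_Nil by simp
  show ?thesis unfolding set_S_bad
    using b0 b1 by (auto simp: length_Suc_conv)
qed

lemma S2: "set_S (Suc (Suc 0)) = {[0,0],[1,1]}"
proof -
  have b00: "\<not> bad [0,0]" using bad_rep[of 2] by (simp add: numeral_2_eq_2)
  have b01: "bad [0,1]" using bad_app1[of "[0]"] bad_rep[of 1] by simp
  have b10: "bad [1,0]" using bad_app10[of "[]"] by simp
  have b11: "\<not> bad [1,1]" using bad_app1[of "[1]"] bad_app1[of "[]"] bad_Nil by simp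
  show ?thesis unfolding set_S_bad
    using b00 b01 b10 b11 by (auto simp: length_Suc_conv)
qed

lemma card_S_rr: "card (set_S n) = rr n"
proof (induction n rule: rr.induct)
  case 1 then show ?case by (simp add: S0)
next
  case 2 then show ?case by (simp add: S1)
next
  case 3 then show ?case by (simp add: S2)
next
  case (4 n) then show ?case by (simp add: card_S_rec)
qed

lemma seq_c_rr: "seq_c n = rr n"
  using card_S_rr by (simp add: seq_c_def)



definition cell_ok :: "nat list list \<Rightarrow> nat \<Rightarrow> nat \<Rightarrow> bool" where
  "cell_ok A i j \<longleftrightarrow>
        (A ! i ! j = 1 \<longrightarrow> (0 < j \<and> A ! i ! (j - 1) = 0) \<or> (0 < i \<and> A ! (i - 1) ! j = 0))
      \<and> (A ! i ! j = 0 \<longrightarrow> \<not> (0 < j \<and> A ! i ! (j - 1) = 0) \<and> \<not> (0 < i \<and> A ! (i - 1) ! j = 0))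
      \<and> (A ! i ! j = 2 \<longrightarrow> 2 \<le> i \<and> A ! (i - 1) ! j = 1 \<and> A ! (i - 2) ! j = 0)"

lemma array_ok_cell: "array_ok A \<longleftrightarrow> (\<forall>i < length A. \<forall>j < 2. cell_ok A i j)"
  unfolding array_ok_def cell_ok_def by blast

lemma cell_ok_app: "i < length B \<Longrightarrow> cell_ok (B @ [r]) i j = cell_ok B i j"
  unfolding cell_ok_def by (simp add: nth_append)

definition rowc :: "nat list list \<Rightarrow> nat list \<Rightarrow> bool" where
  "rowc B r \<longleftrightarrow> (\<forall>j < 2. cell_ok (B @ [r]) (length B) j)"

lemma array_ok_snoc: "array_ok (B @ [r]) \<longleftrightarrow> array_ok B \<and> rowc B r"
proof -
  have s: "(\<forall>i<Suc m. P i) \<longleftrightarrow> (\<forall>i<m. P i) \<and> P m" for P and m :: nat by (auto simp: less_Suc_eq)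
  have "(\<forall>i<length B. \<forall>j<2. cell_ok (B @ [r]) i j) \<longleftrightarrow> (\<forall>i<length B. \<forall>j<2. cell_ok B i j)"
    using cell_ok_app by simp
  then show ?thesis unfolding array_ok_cell rowc_def length_append_singleton s by blast
qed

definition validrow :: "nat list \<Rightarrow> bool" where
  "validrow r \<longleftrightarrow> length r = 2 \<and> set r \<subseteq> {0, 1, 2}"

definition R9 :: "nat list list" where
  "R9 = [[0,0],[0,1],[0,2],[1,0],[1,1],[1,2],[2,0],[2,1],[2,2]]"

lemma validrow_R9: "validrow r \<longleftrightarrow> r \<in> set R9"
proof
  assume "validrow r"
  then obtain a b where "r = [a, b]" "a \<in> {0,1,2}" "b \<in> {0,1,2}"
    unfolding validrow_def by (auto simp: length_Suc_conv numeral_2_eq_2)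
  then show "r \<in> set R9" unfolding R9_def by auto
qed (auto simp: R9_def validrow_def)

lemma set_A_alt: "set_A n = {A. length A = n \<and> (\<forall>row \<in> set A. validrow row) \<and> array_ok A}"
  unfolding set_A_def validrow_def by blast

lemma set_A_0: "set_A 0 = {[]}"
  unfolding set_A_alt by (auto simp: array_ok_def)

lemma set_A_Suc: "set_A (Suc n) = (\<lambda>(B, r). B @ [r]) ` {(B, r). B \<in> set_A n \<and> validrow r \<and> rowc B r}"
proof (intro equalityI subsetI)
  fix A assume A: "A \<in> set_A (Suc n)"
  then have "length A = Suc n" unfolding set_A_alt by blast
  then obtain B r where e: "A = B @ [r]" "length B = n" by (metis length_Suc_conv_rev)
  with A have "B \<in> set_A n \<and> validrow r \<and> rowc B r" unfolding set_A_alt by (auto simp: array_ok_snoc)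
  then show "A \<in> (\<lambda>(B, r). B @ [r]) ` {(B, r). B \<in> set_A n \<and> validrow r \<and> rowc B r}"
    using e by force
next
  fix A assume "A \<in> (\<lambda>(B, r). B @ [r]) ` {(B, r). B \<in> set_A n \<and> validrow r \<and> rowc B r}"
  then show "A \<in> set_A (Suc n)" unfolding set_A_alt by (auto simp: array_ok_snoc)
qed

lemma finite_A: "finite (set_A n)"
proof -
  have "set_A n \<subseteq> {xs. set xs \<subseteq> set R9 \<and> length xs = n}" unfolding set_A_alt validrow_R9 by blast
  moreover have "finite {xs. set xs \<subseteq> set R9 \<and> length xs = n}"
    by (rule finite_lists_length_eq) simp
  ultimately show ?thesis by (rule finite_subset)
qed

lemma all_less_2: "(\<forall>j < (2::nat). P j) \<longleftrightarrow> P 0 \<and> P 1"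
  by (auto simp: less_Suc_eq numeral_2_eq_2)

definition cc :: "nat list \<Rightarrow> nat list \<Rightarrow> nat list \<Rightarrow> bool" where
  "cc p q r \<longleftrightarrow> validrow r \<and> (\<forall>j < 2.
        (r ! j = 1 \<longrightarrow> (0 < j \<and> r ! (j - 1) = 0) \<or> q ! j = 0)
      \<and> (r ! j = 0 \<longrightarrow> \<not> (0 < j \<and> r ! (j - 1) = 0) \<and> \<not> (q ! j = 0))
      \<and> (r ! j = 2 \<longrightarrow> q ! j = 1 \<and> p ! j = 0))"

lemma rowc_cc: "length B = n \<Longrightarrow> 2 \<le> n \<Longrightarrow> validrow r \<and> rowc B r \<longleftrightarrow> cc (B ! (n - 2)) (B ! (n - 1)) r"
  unfolding rowc_def cc_def cell_ok_def by (simp add: nth_append)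

lemma rowc_0: "rowc [] r \<longleftrightarrow> (\<forall>j<2. cell_ok [r] 0 j)"
  by (simp add: rowc_def)



lemma rowc_first: "validrow r \<Longrightarrow> rowc [] r \<longleftrightarrow> r = [0,1]"
proof -
  have "\<forall>r\<in>set R9. rowc [] r \<longleftrightarrow> r = [0,1]"
    by (simp add: R9_def rowc_0 cell_ok_def all_less_2)
  then show "validrow r \<Longrightarrow> rowc [] r \<longleftrightarrow> r = [0,1]" by (simp add: validrow_R9)
qed

lemma rowc_second: "validrow r \<Longrightarrow> rowc [[0,1]] r \<longleftrightarrow> r = [1,0]"
proof -
  have "\<forall>r\<in>set R9. rowc [[0,1]] r \<longleftrightarrow> r = [1,0]"
    by (simp add: R9_def rowc_def cell_ok_def all_less_2)
  then show "validrow r \<Longrightarrow> rowc [[0,1]] r \<longleftrightarrow> r = [1,0]" by (simp add: validrow_R9)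
qed

lemma validrow_01: "validrow [0,1]" and validrow_10: "validrow [1,0]"
  by (simp_all add: validrow_def)

lemma set_A_1: "set_A (Suc 0) = {[[0,1]]}"
  unfolding set_A_Suc set_A_0 using rowc_first validrow_01
  by (auto intro!: image_eqI[where x = "([], [0,1])"])

lemma set_A_2: "set_A 2 = {[[0,1],[1,0]]}"
  unfolding numeral_2_eq_2 set_A_Suc[of "Suc 0"] set_A_1 using rowc_second validrow_10
  by (auto intro!: image_eqI[where x = "([[0,1]], [1,0])"])

definition ST :: "(nat list \<times> nat list) list" where
  "ST = [([0,1],[1,0]), ([1,0],[0,1]), ([1,0],[2,1]), ([0,1],[1,2]), ([1,2],[0,1]),
         ([1,2],[2,0]), ([0,2],[1,0]), ([2,1],[0,1]), ([2,1],[0,2]), ([2,0],[0,1])]"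

lemma ST_closed: "\<forall>s\<in>set ST. \<forall>r\<in>set R9. cc (fst s) (snd s) r \<longrightarrow> (snd s, r) \<in> set ST"
  by (simp add: ST_def R9_def cc_def validrow_def all_less_2)

lemma rows_valid: "A \<in> set_A n \<Longrightarrow> i < n \<Longrightarrow> validrow (A ! i)"
  unfolding set_A_alt by auto

lemma len_A: "A \<in> set_A n \<Longrightarrow> length A = n"
  unfolding set_A_alt by auto

lemma reach: "2 \<le> n \<Longrightarrow> A \<in> set_A n \<Longrightarrow> (A ! (n - 2), A ! (n - 1)) \<in> set ST"
proof (induction n arbitrary: A rule: nat_induct_at_least)
  case base
  then show ?case by (simp add: set_A_2 ST_def)
next
  case (Suc n)
  from Suc.prems obtain B r where e: "A = B @ [r]" and B: "B \<in> set_A n" and vr: "validrow r" and rc: "rowc B r"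
    unfolding set_A_Suc by auto
  have lB: "length B = n" using B by (rule len_A)
  have c: "cc (B ! (n - 2)) (B ! (n - 1)) r" using rowc_cc[OF lB Suc.hyps] vr rc by blast
  have "(B ! (n - 2), B ! (n - 1)) \<in> set ST" using Suc.IH B by blast
  then have "(B ! (n - 1), r) \<in> set ST" using ST_closed c vr validrow_R9 by fastforce
  moreover have "A ! (Suc n - 2) = B ! (n - 1)" "A ! (Suc n - 1) = r"
    using e lB Suc.hyps by (auto simp: nth_append)
  ultimately show ?case by simp
qed

definition EE :: "nat \<Rightarrow> nat list \<Rightarrow> nat list \<Rightarrow> nat list list set" where
  "EE n p q = {A \<in> set_A n. A ! (n - 2) = p \<and> A ! (n - 1) = q}"

definition ee :: "nat \<Rightarrow> nat list \<Rightarrow> nat list \<Rightarrow> nat" where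
  "ee n p q = card (EE n p q)"

lemma finite_EE: "finite (EE n p q)"
  unfolding EE_def using finite_A by simp

lemma ee_zero: "2 \<le> n \<Longrightarrow> (p, q) \<notin> set ST \<Longrightarrow> ee n p q = 0"
proof -
  assume n2: "2 \<le> n" and np: "(p, q) \<notin> set ST"
  have "EE n p q = {}" unfolding EE_def using reach[OF n2] np by blast
  then show ?thesis by (simp add: ee_def)
qed

lemma ee_rec: "2 \<le> n \<Longrightarrow> ee (Suc n) q r = (\<Sum>p\<in>set R9. if cc p q r then ee n p q else 0)"
proof -
  assume n2: "2 \<le> n"
  let ?X = "{B \<in> set_A n. B ! (n - 1) = q \<and> cc (B ! (n - 2)) q r}"
  have "EE (Suc n) q r = (\<lambda>B. B @ [r]) ` ?X"
  proof (intro equalityI subsetI)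
    fix A assume "A \<in> EE (Suc n) q r"
    then have A: "A \<in> set_A (Suc n)" and q: "A ! (n - 1) = q" and r: "A ! n = r"
      unfolding EE_def by auto
    from A obtain B r' where e: "A = B @ [r']" and B: "B \<in> set_A n" and vr: "validrow r'" and rc: "rowc B r'"
      unfolding set_A_Suc by auto
    have lB: "length B = n" using B by (rule len_A)
    have rr: "r' = r" using r e lB by (metis nth_append_length)
    have qq: "B ! (n - 1) = q" using q e lB n2 by (simp add: nth_append)
    have "cc (B ! (n - 2)) (B ! (n - 1)) r'" using rowc_cc[OF lB n2] vr rc by blast
    then show "A \<in> (\<lambda>B. B @ [r]) ` ?X" using e rr qq B by auto
  next
    fix A assume "A \<in> (\<lambda>B. B @ [r]) ` ?X"
    then obtain B where e: "A = B @ [r]" and B: "B \<in> set_A n" and q: "B ! (n - 1) = q"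
      and c: "cc (B ! (n - 2)) q r" by auto
    have lB: "length B = n" using B by (rule len_A)
    have "validrow r \<and> rowc B r" using rowc_cc[OF lB n2] c q by blast
    then have "A \<in> set_A (Suc n)" unfolding set_A_Suc e using B by auto
    moreover have "A ! (Suc n - 2) = q" "A ! (Suc n - 1) = r" using e lB n2 q by (auto simp: nth_append)
    ultimately show "A \<in> EE (Suc n) q r" unfolding EE_def by simp
  qed
  then have "ee (Suc n) q r = card ?X"
    unfolding ee_def by (simp add: card_image inj_on_def)
  also have "?X = (\<Union>p\<in>set R9. if cc p q r then EE n p q else {})"
  proof (intro equalityI subsetI)
    fix B assume B: "B \<in> ?X"
    then have "validrow (B ! (n - 2))" using rows_valid[of B n "n - 2"] n2 by auto
    then have "B ! (n - 2) \<in> set R9" by (simp add: validrow_R9)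
    then show "B \<in> (\<Union>p\<in>set R9. if cc p q r then EE n p q else {})"
      using B unfolding EE_def by (auto intro!: bexI[of _ "B ! (n - 2)"])
  next
    fix B assume "B \<in> (\<Union>p\<in>set R9. if cc p q r then EE n p q else {})"
    then show "B \<in> ?X" unfolding EE_def by (auto split: if_splits)
  qed
  also have "card \<dots> = (\<Sum>p\<in>set R9. card (if cc p q r then EE n p q else {}))"
    by (rule card_UN_disjoint) (auto simp: finite_EE, auto simp: EE_def)
  also have "\<dots> = (\<Sum>p\<in>set R9. if cc p q r then ee n p q else 0)"
    by (rule sum.cong) (auto simp: ee_def)
  finally show ?thesis .
qed

lemma distinct_R9: "distinct R9" by (simp add: R9_def)
lemma distinct_ST: "distinct ST" by (simp add: ST_def)

lemma ee_rec_list: "2 \<le> n \<Longrightarrow> ee (Suc n) q r = sum_list (map (\<lambda>p. if cc p q r then ee n p q else 0) R9)"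
proof -
  assume "2 \<le> n"
  from ee_rec[OF this, of q r] show ?thesis by (simp only: sum.distinct_set_conv_list[OF distinct_R9])
qed

lemma card_A_ST: "2 \<le> n \<Longrightarrow> card (set_A n) = sum_list (map (\<lambda>s. ee n (fst s) (snd s)) ST)"
proof -
  assume n2: "2 \<le> n"
  have "set_A n = (\<Union>s\<in>set ST. EE n (fst s) (snd s))"
  proof (intro equalityI subsetI)
    fix A assume A: "A \<in> set_A n"
    then have "(A ! (n - 2), A ! (n - 1)) \<in> set ST" by (rule reach[OF n2])
    moreover have "A \<in> EE n (A ! (n - 2)) (A ! (n - 1))" using A by (simp add: EE_def)
    ultimately show "A \<in> (\<Union>s\<in>set ST. EE n (fst s) (snd s))" by force
  next
    fix A assume "A \<in> (\<Union>s\<in>set ST. EE n (fst s) (snd s))"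
    then show "A \<in> set_A n" by (auto simp: EE_def)
  qed
  then have "card (set_A n) = (\<Sum>s\<in>set ST. card (EE n (fst s) (snd s)))"
    by (simp only:) (rule card_UN_disjoint, auto simp: finite_EE, auto simp: EE_def)
  also have "\<dots> = sum_list (map (\<lambda>s. ee n (fst s) (snd s)) ST)"
    unfolding ee_def by (rule sum.distinct_set_conv_list[OF distinct_ST])
  finally show ?thesis .
qed



lemmas ee_simps = ee_rec_list R9_def cc_def validrow_def all_less_2 ee_zero ST_def

context
  fixes n :: nat
  assumes n2: "2 \<le> n"
begin
lemma stA: "ee (Suc n) [0,1] [1,0] = ee n [1,0] [0,1] + ee n [1,2] [0,1] + ee n [2,0] [0,1] + ee n [2,1] [0,1]"
  using n2 by (simp add: ee_simps)
lemma stB: "ee (Suc n) [1,0] [0,1] = ee n [0,1] [1,0] + ee n [0,2] [1,0]"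
  using n2 by (simp add: ee_simps)
lemma stC: "ee (Suc n) [1,0] [2,1] = ee n [0,1] [1,0] + ee n [0,2] [1,0]"
  using n2 by (simp add: ee_simps)
lemma stD: "ee (Suc n) [0,1] [1,2] = ee n [1,0] [0,1] + ee n [2,0] [0,1]"
  using n2 by (simp add: ee_simps)
lemma stE: "ee (Suc n) [1,2] [0,1] = ee n [0,1] [1,2]"
  using n2 by (simp add: ee_simps)
lemma stF: "ee (Suc n) [1,2] [2,0] = ee n [0,1] [1,2]"
  using n2 by (simp add: ee_simps)
lemma stG: "ee (Suc n) [0,2] [1,0] = ee n [2,1] [0,2]"
  using n2 by (simp add: ee_simps)
lemma stH: "ee (Suc n) [2,1] [0,1] = ee n [1,0] [2,1]"
  using n2 by (simp add: ee_simps)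
lemma stI: "ee (Suc n) [2,1] [0,2] = ee n [1,0] [2,1]"
  using n2 by (simp add: ee_simps)
lemma stJ: "ee (Suc n) [2,0] [0,1] = ee n [1,2] [2,0]"
  using n2 by (simp add: ee_simps)
end

lemmas st_all = stA stB stC stD stE stF stG stH stI stJ

lemma card_A_rec: "2 \<le> n \<Longrightarrow> card (set_A (Suc (Suc (Suc n)))) = card (set_A (Suc (Suc n))) + 2 * card (set_A n)"
proof -
  assume n2: "2 \<le> n"
  have a: "2 \<le> Suc n" "2 \<le> Suc (Suc n)" "2 \<le> Suc (Suc (Suc n))" using n2 by simp_all
  show ?thesis
    unfolding card_A_ST[OF a(3)] card_A_ST[OF a(2)] card_A_ST[OF n2]
    apply (simp only: ST_def list.map sum_list_simps fst_conv snd_conv)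
    apply (simp only: st_all[OF a(2)])
    apply (simp only: st_all[OF a(1)])
    apply (simp only: st_all[OF n2])
    by simp
qed

lemma set_A_2': "set_A (Suc (Suc 0)) = {[[0,1],[1,0]]}"
  using set_A_2 by (simp only: numeral_2_eq_2)

lemma ee2: "ee (Suc (Suc 0)) p q = (if p = [0,1] \<and> q = [1,0] then 1 else 0)"
proof -
  have "EE (Suc (Suc 0)) p q = {A \<in> {[[0,1],[1,0]]}. A ! 0 = p \<and> A ! 1 = q}"
    unfolding EE_def set_A_2' by simp
  also have "\<dots> = (if p = [0,1] \<and> q = [1,0] then {[[0,1],[1,0]]} else {})"
    by auto
  finally show ?thesis by (simp add: ee_def)
qed

lemma card_A_3: "card (set_A (Suc (Suc (Suc 0)))) = 2"
proof -
  have a: "2 \<le> Suc (Suc 0)" "2 \<le> Suc (Suc (Suc 0))" by simp_all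
  show ?thesis unfolding card_A_ST[OF a(2)]
    apply (simp only: ST_def list.map sum_list_simps fst_conv snd_conv)
    apply (simp only: st_all[OF a(1)])
    by (simp add: ee2)
qed

lemma card_A_4: "card (set_A (Suc (Suc (Suc (Suc 0))))) = 4"
proof -
  have a: "2 \<le> Suc (Suc 0)" "2 \<le> Suc (Suc (Suc 0))" "2 \<le> Suc (Suc (Suc (Suc 0)))" by simp_all
  show ?thesis unfolding card_A_ST[OF a(3)]
    apply (simp only: ST_def list.map sum_list_simps fst_conv snd_conv)
    apply (simp only: st_all[OF a(2)])
    apply (simp only: st_all[OF a(1)])
    by (simp add: ee2)
qed

lemma seq_d_rr: "seq_d (Suc n) = rr n"
proof (induction n rule: rr.induct)
  case 1 then show ?case by (simp add: seq_d_def set_A_1)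
next
  case 2 then show ?case by (simp add: seq_d_def set_A_2')
next
  case 3 then show ?case using card_A_3 by (simp add: seq_d_def)
next
  case (4 n)
  show ?case
  proof (cases n)
    case 0 then show ?thesis using card_A_4 by (simp add: seq_d_def)
  next
    case (Suc m)
    have "2 \<le> Suc n" using Suc by simp
    from card_A_rec[OF this] 4 show ?thesis by (simp add: seq_d_def)
  qed
qed


theorem corollary1:
  fixes n :: nat
  shows "of_nat (seq_a n) = seq_b (n + 1) \<and> seq_a n = seq_c n \<and> seq_a n = seq_d (n + 1)"
  using seq_a_rr[of n] seq_b_rr[of n] seq_c_rr[of n] seq_d_rr[of n] by simp

end
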